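(* Let $(\Omega,\mathcal F,\mu)$ be a measure space, $p\in[1,\infty)$ and $k\ge1$. Then (i) $\mathscr G_{p,k}\subset\{f\in L^p:\ \mathrm{Var}_{p,k}(f)=0\}\subset\mathscr G_{p,k+1}$; (ii) if $\mu$ has no atoms of infinite measure, then $\{f\in L^p:\ \mathrm{Var}_{p,k}(f)=0\}=\mathscr G_{p,k}$.
   Context: All measures are assumed not identically zero. $\mathscr G_{p,k}$ is the set of functions $\sum_{i=1}^l a_i\mathbf 1_{A_i}\in L^p$ with $l\le k$, $\{A_i\}$ a measurable partition of $\Omega$, $a_i\in\mathbb R$ (as a subset of $L^p$). $p$-variation: for measurable $A$ with $\mu(A)<\infty$, $\mathrm{var}_p(f,A)^p=\frac1{\mu(A)}\int_{A\times A}|f(x)-f(y)|^p\,d\mu(x)d\mu(y)$ if $\mu(A)>0$ and $0$ otherwise; for a finite collection $\mathcal P=(A_i)$ of disjoint measurable sets of finite measure, $\mathrm{var}_p(f,\mathcal P)=(\sum_i\mathrm{var}_p(f,A_i)^p)^{1/p}$; $\mathrm{Var}_{p,k}(f,A)=\inf\{\mathrm{var}_p(f,\mathcal P):\ \mathcal P$ a measurable partition of $A$ with at most $k$ sets$\}$; $\mathrm{Var}_{p,k}(f)=\sup\{\mathrm{Var}_{p,k}(f,A):\ A\in\mathcal F,\ \mu(A)<\infty\}$. An atom is a measurable $A$ with $\mu(A)>0$ such that every measurable $B\subset A$ with $\mu(B)<\mu(A)$ satisfies $\mu(B)=0$. *)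

theory Defs
  imports "HOL-Analysis.Analysis"
begin

definition enn_root :: "real \<Rightarrow> ennreal \<Rightarrow> ennreal" where
  "enn_root p x = (if x = \<infinity> then \<infinity> else ennreal (enn2real x powr (1 / p)))"

text \<open>Membership in L^p (functions, not classes; everything below is a.e.-invariant).\<close>
definition Lp :: "'a measure \<Rightarrow> real \<Rightarrow> ('a \<Rightarrow> real) \<Rightarrow> bool" where
  "Lp M p f \<longleftrightarrow> f \<in> borel_measurable M \<and> integrable M (\<lambda>x. \<bar>f x\<bar> powr p)"

definition Gset :: "'a measure \<Rightarrow> real \<Rightarrow> nat \<Rightarrow> ('a \<Rightarrow> real) set" where
  "Gset M p k = {f. Lp M p f \<and>
     (\<exists>l \<le> k. \<exists>A :: nat \<Rightarrow> 'a set. \<exists>a :: nat \<Rightarrow> real.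
        (\<forall>i<l. A i \<in> sets M) \<and> disjoint_family_on A {..<l} \<and> (\<Union>i<l. A i) = space M \<and>
        (AE x in M. f x = (\<Sum>i<l. a i * indicator (A i) x)))}"

definition varp_pow :: "'a measure \<Rightarrow> real \<Rightarrow> ('a \<Rightarrow> real) \<Rightarrow> 'a set \<Rightarrow> ennreal" where
  "varp_pow M p f A =
     (if emeasure M A > 0 then
        (\<integral>\<^sup>+ x. (\<integral>\<^sup>+ y. indicator (A \<times> A) (x, y) * ennreal (\<bar>f x - f y\<bar> powr p) \<partial>M) \<partial>M)
          / emeasure M A
      else 0)"

definition varp :: "'a measure \<Rightarrow> real \<Rightarrow> ('a \<Rightarrow> real) \<Rightarrow> 'a set \<Rightarrow> ennreal" where
  "varp M p f A = enn_root p (varp_pow M p f A)"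

definition varp_fam :: "'a measure \<Rightarrow> real \<Rightarrow> ('a \<Rightarrow> real) \<Rightarrow> nat \<Rightarrow> (nat \<Rightarrow> 'a set) \<Rightarrow> ennreal" where
  "varp_fam M p f l P = enn_root p (\<Sum>i<l. varp_pow M p f (P i))"

definition Varpk_on :: "'a measure \<Rightarrow> real \<Rightarrow> nat \<Rightarrow> ('a \<Rightarrow> real) \<Rightarrow> 'a set \<Rightarrow> ennreal" where
  "Varpk_on M p k f A = (INF (l, P) \<in> {(l, P). l \<le> k \<and> (\<forall>i<l. P i \<in> sets M) \<and>
       disjoint_family_on P {..<l} \<and> (\<Union>i<l. P i) = A}. varp_fam M p f l P)"

definition Varpk :: "'a measure \<Rightarrow> real \<Rightarrow> nat \<Rightarrow> ('a \<Rightarrow> real) \<Rightarrow> ennreal" where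
  "Varpk M p k f = (SUP A \<in> {A \<in> sets M. emeasure M A < \<infinity>}. Varpk_on M p k f A)"

definition is_atom :: "'a measure \<Rightarrow> 'a set \<Rightarrow> bool" where
  "is_atom M A \<longleftrightarrow> A \<in> sets M \<and> emeasure M A > 0 \<and>
     (\<forall>B \<in> sets M. B \<subseteq> A \<and> emeasure M B < emeasure M A \<longrightarrow> emeasure M B = 0)"

end

theory Submission
  imports Defs
begin

lemma enn_root_zero: "enn_root p 0 = 0"
  by (simp add: enn_root_def)

lemma enn_root_ge:
  assumes "0 < c" "ennreal c \<le> x" "0 < p"
  shows "ennreal (c powr (1/p)) \<le> enn_root p x"
proof (cases "x = \<infinity>")
  case True then show ?thesis by (simp add: enn_root_def)
next
  case False
  then obtain r where r: "x = ennreal r" "0 \<le> r" by (cases x) auto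
  with assms have "c \<le> r" by (simp add: ennreal_le_iff)
  then have "c powr (1/p) \<le> r powr (1/p)"
    using assms by (intro powr_mono2) auto
  then show ?thesis using r False by (simp add: enn_root_def)
qed

lemma pair_bound:
  fixes f :: "'a \<Rightarrow> real"
  assumes p: "0 < p" and C: "C \<in> sets M" "C \<subseteq> P" and D: "D \<in> sets M" "D \<subseteq> P"
    and d: "0 \<le> d" "\<And>x y. x \<in> C \<Longrightarrow> y \<in> D \<Longrightarrow> d \<le> \<bar>f x - f y\<bar>"
  shows "ennreal (d powr p) * emeasure M D * emeasure M C \<le>
    (\<integral>\<^sup>+ x. (\<integral>\<^sup>+ y. indicator (P \<times> P) (x, y) * ennreal (\<bar>f x - f y\<bar> powr p) \<partial>M) \<partial>M)"
proof -
  have "(\<integral>\<^sup>+ x. (\<integral>\<^sup>+ y. ennreal (d powr p) * indicator C x * indicator D y \<partial>M) \<partial>M)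
     \<le> (\<integral>\<^sup>+ x. (\<integral>\<^sup>+ y. indicator (P \<times> P) (x, y) * ennreal (\<bar>f x - f y\<bar> powr p) \<partial>M) \<partial>M)"
  proof (intro nn_integral_mono)
    fix x y
    show "ennreal (d powr p) * indicator C x * indicator D y
       \<le> indicator (P \<times> P) (x, y) * ennreal (\<bar>f x - f y\<bar> powr p)"
    proof (cases "x \<in> C \<and> y \<in> D")
      case True
      then have "d powr p \<le> \<bar>f x - f y\<bar> powr p" using d p by (intro powr_mono2) auto
      then show ?thesis using True C D by (auto simp: indicator_def ennreal_leI)
    qed (auto simp: indicator_def)
  qed
  moreover have "(\<integral>\<^sup>+ x. (\<integral>\<^sup>+ y. ennreal (d powr p) * indicator C x * indicator D y \<partial>M) \<partial>M)
      = (\<integral>\<^sup>+ x. (ennreal (d powr p) * emeasure M D) * indicator C x \<partial>M)"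
  proof (intro nn_integral_cong)
    fix x
    show "(\<integral>\<^sup>+ y. ennreal (d powr p) * indicator C x * indicator D y \<partial>M) =
      (ennreal (d powr p) * emeasure M D) * indicator C x"
      using nn_integral_cmult_indicator[OF D(1), of "ennreal (d powr p) * indicator C x"]
      by (simp add: mult_ac)
  qed
  moreover have "\<dots> = ennreal (d powr p) * emeasure M D * emeasure M C"
    using nn_integral_cmult_indicator[OF C(1)] by simp
  ultimately show ?thesis by simp
qed

lemma core:
  fixes f :: "'a \<Rightarrow> real" and B :: "'b \<Rightarrow> 'a set"
  assumes p: "0 < p" and k: "1 \<le> k"
    and A: "A \<in> sets M" "emeasure M A < \<infinity>"
    and J: "finite J" "k < card J"
    and B: "\<And>j. j \<in> J \<Longrightarrow> B j \<in> sets M" "\<And>j. j \<in> J \<Longrightarrow> B j \<subseteq> A"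
    and b: "0 < b" "\<And>j. j \<in> J \<Longrightarrow> b \<le> measure M (B j)"
    and d: "0 < d" "\<And>j j' x y. j \<in> J \<Longrightarrow> j' \<in> J \<Longrightarrow> j \<noteq> j' \<Longrightarrow> x \<in> B j \<Longrightarrow> y \<in> B j'
               \<Longrightarrow> d \<le> \<bar>f x - f y\<bar>"
  shows "Varpk_on M p k f A \<noteq> 0"
proof -
  have Af: "A \<in> fmeasurable M" using A by (auto simp: fmeasurable_def)
  have "J \<noteq> {}" using J k by auto
  then obtain j0 where j0: "j0 \<in> J" by auto
  have "measure M (B j0) \<le> measure M A"
    using B j0 Af by (intro measure_mono_fmeasurable) auto
  with b j0 have mA: "b \<le> measure M A" by force
  define c where "c = d powr p * (b / k)^2 / measure M A"
  have c: "0 < c" unfolding c_def using d b mA k by auto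
  have fin: "emeasure M X \<noteq> \<infinity>" if "X \<subseteq> A" "X \<in> sets M" for X
    using emeasure_mono[OF that(1) A(1)] A(2) by (auto simp: top_unique)
  have key: "ennreal (c powr (1/p)) \<le> varp_fam M p f l P"
    if l: "l \<le> k" "\<forall>i<l. P i \<in> sets M" "disjoint_family_on P {..<l}" "(\<Union>i<l. P i) = A" for l P
  proof -
    have ex: "\<exists>i<l. b / k \<le> measure M (P i \<inter> B j)" if j: "j \<in> J" for j
    proof (rule ccontr)
      assume "\<not> ?thesis"
      hence lt: "\<forall>i<l. measure M (P i \<inter> B j) < b / k" by auto
      have "B j = (\<Union>i<l. P i \<inter> B j)" using l(4) B(2)[OF j] by auto
      hence "measure M (B j) = measure M (\<Union>i<l. P i \<inter> B j)" by simp
      also have "\<dots> = (\<Sum>i<l. measure M (P i \<inter> B j))"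
      proof (rule measure_finite_Union)
        show "disjoint_family_on (\<lambda>i. P i \<inter> B j) {..<l}"
          using l(3) unfolding disjoint_family_on_def by auto
        show "\<And>i. i \<in> {..<l} \<Longrightarrow> emeasure M (P i \<inter> B j) \<noteq> \<infinity>"
          using l B j by (intro fin) auto
      qed (use l B j in auto)
      also have "\<dots> < b"
      proof (cases "l = 0")
        case True then show ?thesis using b by simp
      next
        case False
        then have "(\<Sum>i<l. measure M (P i \<inter> B j)) < (\<Sum>i<l. b / k)"
          using lt by (intro sum_strict_mono) auto
        also have "\<dots> = l * (b / k)" by simp
        also have "\<dots> \<le> k * (b / k)" using l(1) b by (intro mult_right_mono) auto
        also have "\<dots> = b" using k by simp
        finally show ?thesis .
      qed
      finally show False using b(2)[OF j] by simp
    qed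
    then obtain g where g: "\<forall>j\<in>J. g j < l \<and> b / k \<le> measure M (P (g j) \<inter> B j)"
      by metis
    have "\<not> inj_on g J"
    proof
      assume "inj_on g J"
      then have "card J \<le> card {..<l}" using g by (intro card_inj_on_le) auto
      then show False using J l by simp
    qed
    then obtain j j' where jj: "j \<in> J" "j' \<in> J" "j \<noteq> j'" "g j = g j'"
      by (auto simp: inj_on_def)
    define i where "i = g j"
    have il: "i < l" using g jj i_def by auto
    define C where "C = P i \<inter> B j"
    define D where "D = P i \<inter> B j'"
    have mC: "b / k \<le> measure M C" using g jj unfolding C_def i_def by auto
    have mD: "b / k \<le> measure M D" using g jj unfolding D_def i_def by metis
    have Pi: "P i \<in> sets M" "P i \<subseteq> A" using l il by auto
    have CD: "C \<in> sets M" "D \<in> sets M" "C \<subseteq> P i" "D \<subseteq> P i"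
      using Pi B jj unfolding C_def D_def by auto
    have eC: "emeasure M C = ennreal (measure M C)"
      using fin CD Pi by (intro emeasure_eq_ennreal_measure) auto
    have eD: "emeasure M D = ennreal (measure M D)"
      using fin CD Pi by (intro emeasure_eq_ennreal_measure) auto
    have eP: "emeasure M (P i) = ennreal (measure M (P i))"
      using fin Pi by (intro emeasure_eq_ennreal_measure) auto
    have PA: "measure M (P i) \<le> measure M A"
      using Pi Af by (intro measure_mono_fmeasurable) auto
    have CP: "measure M C \<le> measure M (P i)"
      using CD Pi Af fin by (intro measure_mono_fmeasurable) (auto simp: fmeasurable_def less_top)
    have bk: "0 < b / k" using b k by auto
    have mP: "0 < measure M (P i)" using bk mC CP by linarith
    define I where "I = (\<integral>\<^sup>+ x. (\<integral>\<^sup>+ y. indicator (P i \<times> P i) (x, y) * ennreal (\<bar>f x - f y\<bar> powr p) \<partial>M) \<partial>M)"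
    have sep: "\<And>x y. x \<in> C \<Longrightarrow> y \<in> D \<Longrightarrow> d \<le> \<bar>f x - f y\<bar>"
      using d(2)[OF jj(1,2,3)] unfolding C_def D_def by auto
    have "ennreal (d powr p) * emeasure M D * emeasure M C \<le> I"
      unfolding I_def using d p CD sep by (intro pair_bound) auto
    hence I1: "ennreal (d powr p * measure M D * measure M C) \<le> I"
      using eC eD by (simp add: ennreal_mult)
    have vp: "varp_pow M p f (P i) = I / ennreal (measure M (P i))"
      unfolding varp_pow_def I_def using mP eP by simp
    have "ennreal (d powr p * measure M D * measure M C) / ennreal (measure M (P i))
          \<le> I / ennreal (measure M (P i))"
      using I1 by (rule divide_right_mono_ennreal)
    moreover have "ennreal (d powr p * measure M D * measure M C) / ennreal (measure M (P i))
       = ennreal (d powr p * measure M D * measure M C / measure M (P i))"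
      using mP bk mC mD by (intro divide_ennreal) auto
    moreover have "c \<le> d powr p * measure M D * measure M C / measure M (P i)"
    proof -
      have "(b / k)^2 \<le> measure M D * measure M C"
        using mult_mono[OF mD mC] bk unfolding power2_eq_square by auto
      hence "d powr p * (b / k)^2 \<le> d powr p * (measure M D * measure M C)"
        by (intro mult_left_mono) auto
      moreover have "0 \<le> d powr p * (b / k)^2" by simp
      ultimately show ?thesis unfolding c_def using mP PA
        by (simp add: mult.assoc) (intro frac_le, auto)
    qed
    ultimately have "ennreal c \<le> varp_pow M p f (P i)"
      using vp by (metis ennreal_leI order_trans)
    also have "\<dots> \<le> (\<Sum>i<l. varp_pow M p f (P i))"
      using il by (intro member_le_sum) auto
    finally have "ennreal c \<le> (\<Sum>i<l. varp_pow M p f (P i))" .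
    then show ?thesis unfolding varp_fam_def using c p by (intro enn_root_ge)
  qed
  have "ennreal (c powr (1/p)) \<le> Varpk_on M p k f A"
    unfolding Varpk_on_def by (rule INF_greatest) (use key in auto)
  moreover have "0 < c powr (1/p)" using c by simp
  ultimately show ?thesis by (metis ennreal_eq_0_iff not_le order_antisym zero_le)
qed

lemma fin_sets:
  fixes f :: "'a \<Rightarrow> real"
  assumes "f \<in> borel_measurable M" "finite T"
  shows "{x \<in> space M. f x \<in> T} \<in> sets M"
proof -
  have "T \<in> sets borel" using assms(2) by (simp add: borel_closed finite_imp_closed)
  then have "f -` T \<inter> space M \<in> sets M" using assms(1) by (intro measurable_sets)
  moreover have "{x \<in> space M. f x \<in> T} = f -` T \<inter> space M" by auto
  ultimately show ?thesis by simp
qed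

lemma ball_sets:
  fixes f :: "'a \<Rightarrow> real"
  assumes "f \<in> borel_measurable M"
  shows "{x \<in> space M. \<bar>f x - w\<bar> < r} \<in> sets M" "{x \<in> space M. c \<le> \<bar>f x\<bar>} \<in> sets M"
  using assms by measurable

lemma Varpk_zero_on:
  assumes "Varpk M p k f = 0" "A \<in> sets M" "emeasure M A < \<infinity>"
  shows "Varpk_on M p k f A = 0"
proof -
  have "Varpk_on M p k f A \<le> Varpk M p k f"
    unfolding Varpk_def using assms(2,3) by (intro SUP_upper) auto
  then show ?thesis using assms(1) by simp
qed

lemma cheb:
  fixes f :: "'a \<Rightarrow> real"
  assumes "Lp M p f" "0 < c" "0 < p"
  shows "emeasure M {x \<in> space M. c \<le> \<bar>f x\<bar>} < \<infinity>"
proof -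
  define E where "E = {x \<in> space M. c \<le> \<bar>f x\<bar>}"
  have fm: "f \<in> borel_measurable M" and int: "integrable M (\<lambda>x. \<bar>f x\<bar> powr p)"
    using assms(1) by (auto simp: Lp_def)
  have E: "E \<in> sets M" unfolding E_def using fm by (rule ball_sets)
  have "ennreal (c powr p) * emeasure M E = (\<integral>\<^sup>+x. ennreal (c powr p) * indicator E x \<partial>M)"
    using nn_integral_cmult_indicator[OF E] by simp
  also have "\<dots> \<le> (\<integral>\<^sup>+x. ennreal (norm (\<bar>f x\<bar> powr p)) \<partial>M)"
  proof (intro nn_integral_mono)
    fix x assume "x \<in> space M"
    show "ennreal (c powr p) * indicator E x \<le> ennreal (norm (\<bar>f x\<bar> powr p))"
    proof (cases "x \<in> E")
      case True
      then have "c powr p \<le> \<bar>f x\<bar> powr p" using assms unfolding E_def by (intro powr_mono2) auto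
      then show ?thesis using True by (auto intro: ennreal_leI)
    qed auto
  qed
  also have "\<dots> < \<infinity>" using int by (simp add: integrable_iff_bounded)
  finally have "ennreal (c powr p) * emeasure M E < \<infinity>" .
  moreover have "0 < c powr p" using assms by simp
  ultimately show ?thesis unfolding E_def[symmetric]
    by (auto simp: ennreal_mult_less_top)
qed

lemma min_sep:
  fixes W :: "real set"
  assumes "finite W"
  shows "\<exists>r>0. \<forall>u\<in>W. \<forall>v\<in>W. u \<noteq> v \<longrightarrow> 3 * r \<le> \<bar>u - v\<bar>"
proof -
  define D where "D = (\<lambda>(u,v). \<bar>u - v\<bar>) ` {(u,v). u \<in> W \<and> v \<in> W \<and> u \<noteq> v}"
  have fD: "finite D" unfolding D_def
    by (rule finite_imageI, rule finite_subset[of _ "W \<times> W"]) (use assms in auto)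
  show ?thesis
  proof (cases "D = {}")
    case True
    then show ?thesis by (intro exI[of _ 1]) (auto simp: D_def)
  next
    case False
    have pos: "0 < Min D" using fD False by (subst Min_gr_iff) (auto simp: D_def)
    show ?thesis
    proof (intro exI[of _ "Min D / 3"] conjI ballI impI)
      fix u v assume "u \<in> W" "v \<in> W" "u \<noteq> v"
      then have "\<bar>u - v\<bar> \<in> D" unfolding D_def by force
      then show "3 * (Min D / 3) \<le> \<bar>u - v\<bar>" using fD by simp
    qed (use pos in simp)
  qed
qed

lemma sep:
  fixes f :: "'a \<Rightarrow> real" and W :: "real set"
  assumes p: "0 < p" and k: "1 \<le> k" and V: "Varpk M p k f = 0"
    and W: "finite W" "k < card W"
    and r: "0 < r" "\<And>w w'. w \<in> W \<Longrightarrow> w' \<in> W \<Longrightarrow> w \<noteq> w' \<Longrightarrow> 3 * r \<le> \<bar>w - w'\<bar>"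
    and B: "\<And>w. w \<in> W \<Longrightarrow> B w \<in> sets M" "\<And>w. w \<in> W \<Longrightarrow> 0 < emeasure M (B w)"
      "\<And>w. w \<in> W \<Longrightarrow> emeasure M (B w) < \<infinity>" "\<And>w x. w \<in> W \<Longrightarrow> x \<in> B w \<Longrightarrow> \<bar>f x - w\<bar> < r"
  shows False
proof -
  define A where "A = (\<Union>w\<in>W. B w)"
  have A: "A \<in> sets M" unfolding A_def using B W by auto
  have "emeasure M A \<le> (\<Sum>w\<in>W. emeasure M (B w))"
    unfolding A_def using W B by (intro emeasure_subadditive_finite) auto
  also have "\<dots> < \<infinity>" using B W by (simp add: sum_Pinfty less_top)
  finally have Afin: "emeasure M A < \<infinity>" .
  have "W \<noteq> {}" using W k by auto
  define b where "b = Min ((\<lambda>w. measure M (B w)) ` W)"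
  have mpos: "0 < measure M (B w)" if "w \<in> W" for w
  proof -
    have "emeasure M (B w) = ennreal (measure M (B w))"
      using B(3)[OF that] by (intro emeasure_eq_ennreal_measure) (simp add: less_top)
    then show ?thesis using B(2)[OF that] by (simp add: ennreal_less_zero_iff)
  qed
  have b: "0 < b" unfolding b_def using W \<open>W \<noteq> {}\<close> mpos by (subst Min_gr_iff) auto
  have "Varpk_on M p k f A \<noteq> 0"
  proof (rule core[where J = W and B = B and b = b and d = r])
    show "\<And>j. j \<in> W \<Longrightarrow> b \<le> measure M (B j)" unfolding b_def using W by auto
    show "\<And>j j' x y. j \<in> W \<Longrightarrow> j' \<in> W \<Longrightarrow> j \<noteq> j' \<Longrightarrow> x \<in> B j \<Longrightarrow> y \<in> B j'
               \<Longrightarrow> r \<le> \<bar>f x - f y\<bar>"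
    proof -
      fix j j' x y assume h: "j \<in> W" "j' \<in> W" "j \<noteq> j'" "x \<in> B j" "y \<in> B j'"
      have "3 * r \<le> \<bar>j - j'\<bar>" using r h by auto
      moreover have "\<bar>f x - j\<bar> < r" "\<bar>f y - j'\<bar> < r" using B h by auto
      ultimately show "r \<le> \<bar>f x - f y\<bar>" by linarith
    qed
    show "\<And>j. j \<in> W \<Longrightarrow> B j \<subseteq> A" unfolding A_def by auto
  qed (use p k A Afin W B b r in auto)
  then show False using Varpk_zero_on[OF V A Afin] by simp
qed

definition ess :: "'a measure \<Rightarrow> ('a \<Rightarrow> real) \<Rightarrow> real set" where
  "ess M f = {v. v \<noteq> 0 \<and> (\<forall>e>0. 0 < emeasure M {x \<in> space M. \<bar>f x - v\<bar> < e})}"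

lemma ess_ball:
  fixes f :: "'a \<Rightarrow> real"
  assumes Lp: "Lp M p f" and p: "0 < p" and w: "w \<in> ess M f" and r: "0 < r" "3 * r \<le> \<bar>w\<bar>"
  shows "{x \<in> space M. \<bar>f x - w\<bar> < r} \<in> sets M"
    "0 < emeasure M {x \<in> space M. \<bar>f x - w\<bar> < r}"
    "emeasure M {x \<in> space M. \<bar>f x - w\<bar> < r} < \<infinity>"
proof -
  have fm: "f \<in> borel_measurable M" using Lp by (simp add: Lp_def)
  show "{x \<in> space M. \<bar>f x - w\<bar> < r} \<in> sets M" using fm by (rule ball_sets)
  show "0 < emeasure M {x \<in> space M. \<bar>f x - w\<bar> < r}" using w r by (auto simp: ess_def)
  have "{x \<in> space M. \<bar>f x - w\<bar> < r} \<subseteq> {x \<in> space M. \<bar>w\<bar> - r \<le> \<bar>f x\<bar>}" by auto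
  then have "emeasure M {x \<in> space M. \<bar>f x - w\<bar> < r} \<le> emeasure M {x \<in> space M. \<bar>w\<bar> - r \<le> \<bar>f x\<bar>}"
    by (rule emeasure_mono[OF _ ball_sets(2)[OF fm]])
  also have "\<dots> < \<infinity>" using r by (intro cheb[OF Lp _ p]) auto
  finally show "emeasure M {x \<in> space M. \<bar>f x - w\<bar> < r} < \<infinity>" .
qed

lemma ess_finite:
  fixes f :: "'a \<Rightarrow> real"
  assumes Lp: "Lp M p f" and p: "0 < p" and k: "1 \<le> k" and V: "Varpk M p k f = 0"
  shows "finite (ess M f) \<and> card (ess M f) \<le> k"
proof (rule ccontr)
  assume H: "\<not> ?thesis"
  obtain W where W: "finite W" "card W = Suc k" "W \<subseteq> ess M f"
  proof (cases "finite (ess M f)")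
    case True
    then have "Suc k \<le> card (ess M f)" using H by auto
    then show ?thesis using that by (rule obtain_subset_with_card_n) auto
  next
    case False
    then show ?thesis using that infinite_arbitrarily_large by metis
  qed
  obtain r where r: "0 < r" "\<forall>u\<in>insert 0 W. \<forall>v\<in>insert 0 W. u \<noteq> v \<longrightarrow> 3 * r \<le> \<bar>u - v\<bar>"
    using min_sep[of "insert 0 W"] W by auto
  have W0: "w \<in> W \<Longrightarrow> w \<noteq> 0" for w using W by (auto simp: ess_def)
  have rw: "w \<in> W \<Longrightarrow> 3 * r \<le> \<bar>w\<bar>" for w using r(2) W0[of w] by force
  show False
  proof (rule sep[OF p k V W(1) _ r(1), where B = "\<lambda>w. {x \<in> space M. \<bar>f x - w\<bar> < r}"])
    show "k < card W" using W by simp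
    show "\<And>w w'. w \<in> W \<Longrightarrow> w' \<in> W \<Longrightarrow> w \<noteq> w' \<Longrightarrow> 3 * r \<le> \<bar>w - w'\<bar>" using r by auto
  qed (use ess_ball[OF Lp p _ r(1)] W rw in auto)
qed

lemma ess_AE:
  fixes f :: "'a \<Rightarrow> real"
  assumes fm: "f \<in> borel_measurable M"
  shows "AE x in M. f x \<in> insert 0 (ess M f)"
proof -
  define Q where "Q = {z. fst z \<in> \<rat> \<and> snd z \<in> \<rat> \<and> 0 < snd z \<and>
      emeasure M {x \<in> space M. \<bar>f x - fst z\<bar> < snd z} = 0}"
  define N where "N = (\<Union>z\<in>Q. {x \<in> space M. \<bar>f x - fst z\<bar> < snd z})"
  have cQ: "countable Q"
    by (rule countable_subset[of _ "\<rat> \<times> \<rat>"]) (auto simp: Q_def countable_rat)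
  have N: "N \<in> null_sets M" unfolding N_def
  proof (rule null_sets_UN'[OF cQ])
    fix z assume "z \<in> Q"
    then show "{x \<in> space M. \<bar>f x - fst z\<bar> < snd z} \<in> null_sets M"
      using ball_sets(1)[OF fm] by (auto simp: Q_def null_sets_def)
  qed
  show ?thesis
  proof (rule AE_I'[OF N], rule subsetI)
    fix x assume "x \<in> {x \<in> space M. f x \<notin> insert 0 (ess M f)}"
    then have x: "x \<in> space M" "f x \<notin> insert 0 (ess M f)" by auto
    define v where "v = f x"
    have "v \<noteq> 0" "v \<notin> ess M f" using x by (auto simp: v_def)
    then obtain e where e: "0 < e" "\<not> 0 < emeasure M {x \<in> space M. \<bar>f x - v\<bar> < e}"
      by (auto simp: ess_def)
    then have e0: "emeasure M {x \<in> space M. \<bar>f x - v\<bar> < e} = 0" by (simp add: not_less)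
    obtain q where q: "q \<in> \<rat>" "v - e/3 < q" "q < v + e/3"
      using Rats_dense_in_real[of "v - e/3" "v + e/3"] e by auto
    obtain e' where e': "e' \<in> \<rat>" "e/3 < e'" "e' < e/2"
      using Rats_dense_in_real[of "e/3" "e/2"] e by auto
    have sub: "{x \<in> space M. \<bar>f x - q\<bar> < e'} \<subseteq> {x \<in> space M. \<bar>f x - v\<bar> < e}"
      using q e' by auto
    have "emeasure M {x \<in> space M. \<bar>f x - q\<bar> < e'} \<le> emeasure M {x \<in> space M. \<bar>f x - v\<bar> < e}"
      using sub ball_sets(1)[OF fm] by (intro emeasure_mono) auto
    then have "(q, e') \<in> Q" using e0 q e' e by (auto simp: Q_def)
    moreover have "x \<in> {x \<in> space M. \<bar>f x - q\<bar> < e'}" using x q e' by (auto simp: v_def)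
    ultimately show "x \<in> N" unfolding N_def by force
  qed
qed

lemma sum_ind_eval:
  fixes a :: "nat \<Rightarrow> real"
  assumes "j < n" "x \<in> A j" "\<And>i. i < n \<Longrightarrow> i \<noteq> j \<Longrightarrow> x \<notin> A i"
  shows "(\<Sum>i<n. a i * indicator (A i) x) = a j"
proof -
  have "(\<Sum>i<n. a i * indicator (A i) x) = (\<Sum>i<n. if i = j then a j else 0)"
    using assms by (intro sum.cong) (auto simp: indicator_def)
  also have "\<dots> = a j" using assms(1) by simp
  finally show ?thesis .
qed

lemma gen:
  fixes f :: "'a \<Rightarrow> real"
  assumes Lp: "Lp M p f" and T: "finite T" "T \<noteq> {}" "card T \<le> m"
    and AE: "AE x in M. f x \<in> T"
  shows "f \<in> Gset M p m"
proof -
  have fm: "f \<in> borel_measurable M" using Lp by (simp add: Lp_def)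
  define n where "n = card T"
  obtain h where h: "bij_betw h {0..<n} T" using ex_bij_betw_nat_finite[OF T(1)] n_def by auto
  have n: "0 < n" using T n_def by auto
  have hinj: "inj_on h {..<n}" and himg: "h ` {..<n} = T"
    using h by (auto simp: bij_betw_def atLeast0LessThan)
  define g where "g x = (if f x \<in> T then f x else h 0)" for x
  have [measurable]: "{x \<in> space M. f x \<in> T} \<in> sets M" using fm T(1) by (rule fin_sets)
  have gm: "g \<in> borel_measurable M" unfolding g_def using fm by measurable
  have gT: "g x \<in> T" for x using himg n unfolding g_def by auto
  define A where "A i = {x \<in> space M. g x \<in> {h i}}" for i
  have Asets: "\<forall>i<n. A i \<in> sets M" unfolding A_def using gm by (auto intro: fin_sets)
  have disj: "disjoint_family_on A {..<n}"
    unfolding disjoint_family_on_def A_def using hinj by (auto simp: inj_on_def)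
  have cover: "(\<Union>i<n. A i) = space M"
  proof
    show "(\<Union>i<n. A i) \<subseteq> space M" unfolding A_def by auto
    show "space M \<subseteq> (\<Union>i<n. A i)"
    proof
      fix x assume x: "x \<in> space M"
      obtain i where i: "i < n" "h i = g x" using gT[of x] himg by (metis imageE lessThan_iff)
      then have "x \<in> A i" using x unfolding A_def by auto
      then show "x \<in> (\<Union>i<n. A i)" using i by auto
    qed
  qed
  have ae: "AE x in M. f x = (\<Sum>i<n. h i * indicator (A i) x)"
    using AE
  proof (rule AE_mp, intro AE_I2 impI)
    fix x assume x: "x \<in> space M" "f x \<in> T"
    obtain j where j: "j < n" "h j = f x" using x(2) himg by (metis imageE lessThan_iff)
    have "(\<Sum>i<n. h i * indicator (A i) x) = h j"
    proof (rule sum_ind_eval[OF j(1)])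
      show "x \<in> A j" using x j unfolding A_def g_def by auto
      show "\<And>i. i < n \<Longrightarrow> i \<noteq> j \<Longrightarrow> x \<notin> A i"
        using x j hinj unfolding A_def g_def by (auto simp: inj_on_def)
    qed
    then show "f x = (\<Sum>i<n. h i * indicator (A i) x)" using j by simp
  qed
  show ?thesis unfolding Gset_def
    using Lp T(3) Asets disj cover ae n_def by blast
qed

lemma G_var:
  fixes f :: "'a \<Rightarrow> real"
  assumes G: "f \<in> Gset M p k" and p: "0 < p"
  shows "Varpk M p k f = 0"
proof -
  obtain l A a where l: "l \<le> k" "\<forall>i<l. A i \<in> sets M" "disjoint_family_on A {..<l}"
    "(\<Union>i<l. A i) = space M" "AE x in M. f x = (\<Sum>i<l. a i * indicator (A i) x)"
    using G unfolding Gset_def by blast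
  have AEi: "AE x in M. x \<in> A i \<longrightarrow> f x = a i" if i: "i < l" for i
    using l(5)
  proof (rule AE_mp, intro AE_I2 impI)
    fix x assume "x \<in> space M" "f x = (\<Sum>i<l. a i * indicator (A i) x)" "x \<in> A i"
    moreover have "(\<Sum>i<l. a i * indicator (A i) x) = a i"
      using i \<open>x \<in> A i\<close> l(3) by (intro sum_ind_eval) (auto simp: disjoint_family_on_def)
    ultimately show "f x = a i" by simp
  qed
  have on: "Varpk_on M p k f E = 0" if E: "E \<in> sets M" for E
  proof -
    define P where "P i = E \<inter> A i" for i
    have zero: "varp_pow M p f (P i) = 0" if i: "i < l" for i
    proof -
      have "(\<integral>\<^sup>+ x. (\<integral>\<^sup>+ y. indicator (P i \<times> P i) (x, y) * ennreal (\<bar>f x - f y\<bar> powr p) \<partial>M) \<partial>M)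
          = (\<integral>\<^sup>+ x. 0 \<partial>M)"
      proof (rule nn_integral_cong_AE)
        show "AE x in M. (\<integral>\<^sup>+ y. indicator (P i \<times> P i) (x, y) * ennreal (\<bar>f x - f y\<bar> powr p) \<partial>M) = 0"
          using AEi[OF i]
        proof (rule AE_mp, intro AE_I2 impI)
          fix x assume hx: "x \<in> A i \<longrightarrow> f x = a i"
          have "(\<integral>\<^sup>+ y. indicator (P i \<times> P i) (x, y) * ennreal (\<bar>f x - f y\<bar> powr p) \<partial>M)
              = (\<integral>\<^sup>+ y. 0 \<partial>M)"
          proof (rule nn_integral_cong_AE)
            show "AE y in M. indicator (P i \<times> P i) (x, y) * ennreal (\<bar>f x - f y\<bar> powr p) = 0"
              using AEi[OF i]
            proof (rule AE_mp, intro AE_I2 impI)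
              fix y assume hy: "y \<in> A i \<longrightarrow> f y = a i"
              show "indicator (P i \<times> P i) (x, y) * ennreal (\<bar>f x - f y\<bar> powr p) = 0"
                using hx hy by (auto simp: indicator_def P_def)
            qed
          qed
          then show "(\<integral>\<^sup>+ y. indicator (P i \<times> P i) (x, y) * ennreal (\<bar>f x - f y\<bar> powr p) \<partial>M) = 0"
            by simp
        qed
      qed
      then show ?thesis unfolding varp_pow_def by simp
    qed
    have "Varpk_on M p k f E \<le> varp_fam M p f l P"
      unfolding Varpk_on_def
    proof (rule INF_lower2)
      show "(l, P) \<in> {(l, P). l \<le> k \<and> (\<forall>i<l. P i \<in> sets M) \<and>
          disjoint_family_on P {..<l} \<and> (\<Union>i<l. P i) = E}"
        using l E sets.sets_into_space[OF E]
        by (auto simp: P_def disjoint_family_on_def)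
    qed simp
    also have "\<dots> = 0" unfolding varp_fam_def using zero by (simp add: enn_root_zero)
    finally show ?thesis by simp
  qed
  have "Varpk M p k f \<le> 0" unfolding Varpk_def using on by (intro SUP_least) auto
  then show ?thesis by simp
qed

theorem proposition3p7:
  fixes M :: "'a measure" and p :: real and k :: nat
  assumes "emeasure M (space M) \<noteq> 0"
    and "1 \<le> p" and "1 \<le> k"
  shows "Gset M p k \<subseteq> {f. Lp M p f \<and> Varpk M p k f = 0}
       \<and> {f. Lp M p f \<and> Varpk M p k f = 0} \<subseteq> Gset M p (k + 1)
       \<and> ((\<forall>A. is_atom M A \<longrightarrow> emeasure M A < \<infinity>) \<longrightarrow>
            {f. Lp M p f \<and> Varpk M p k f = 0} = Gset M p k)"
proof -
  have p: "0 < p" using assms by simp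
  have k: "1 \<le> k" using assms by simp
  have I1: "Gset M p k \<subseteq> {f. Lp M p f \<and> Varpk M p k f = 0}"
  proof
    fix f assume h: "f \<in> Gset M p k"
    have "Lp M p f" using h unfolding Gset_def by blast
    with G_var[OF h p] show "f \<in> {f. Lp M p f \<and> Varpk M p k f = 0}" by simp
  qed
  have I2: "f \<in> Gset M p (k + 1)" if f: "Lp M p f" "Varpk M p k f = 0" for f
  proof -
    have E: "finite (ess M f)" "card (ess M f) \<le> k" using ess_finite[OF f(1) p k f(2)] by auto
    have fm: "f \<in> borel_measurable M" using f by (simp add: Lp_def)
    have "card (insert 0 (ess M f)) \<le> k + 1" using E by (simp add: card_insert_if)
    then show ?thesis using gen[OF f(1), of "insert 0 (ess M f)"] E ess_AE[OF fm] by auto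
  qed
  have I3: "f \<in> Gset M p k" if f: "Lp M p f" "Varpk M p k f = 0"
    and noat: "\<forall>A. is_atom M A \<longrightarrow> emeasure M A < \<infinity>" for f
  proof -
    define E where "E = ess M f"
    have E: "finite E" "card E \<le> k" using ess_finite[OF f(1) p k f(2)] by (auto simp: E_def)
    have E0: "0 \<notin> E" by (simp add: E_def ess_def)
    have fm: "f \<in> borel_measurable M" using f by (simp add: Lp_def)
    have AE0: "AE x in M. f x \<in> insert 0 E" using ess_AE[OF fm] by (simp add: E_def)
    show ?thesis
    proof (cases "card E < k")
      case True
      then have "card (insert 0 E) \<le> k" using E by (simp add: card_insert_if)
      then show ?thesis using gen[OF f(1), of "insert 0 E"] E AE0 by auto
    next
      case False
      then have cE: "card E = k" using E by simp
      show ?thesis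
      proof (cases "AE x in M. f x \<in> E")
        case True
        have "E \<noteq> {}" using cE k E by auto
        then show ?thesis using gen[OF f(1), of E] E True cE by auto
      next
        case False
        define Z where "Z = space M - {x \<in> space M. f x \<in> E}"
        have Zs: "Z \<in> sets M" unfolding Z_def using fin_sets[OF fm E(1)] by auto
        have "{x \<in> space M. \<not> f x \<in> E} = Z" unfolding Z_def by auto
        then have Z0: "emeasure M Z \<noteq> 0" using AE_iff_measurable[OF Zs] False by auto
        obtain Z' where Z': "Z' \<in> sets M" "Z' \<subseteq> Z" "0 < emeasure M Z'" "emeasure M Z' < \<infinity>"
        proof (cases "emeasure M Z < \<infinity>")
          case True
          then show ?thesis using that[of Z] Zs Z0 by (auto simp: zero_less_iff_neq_zero)
        next
          case False
          then have "\<not> is_atom M Z" using noat by auto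
          then obtain B where "B \<in> sets M" "B \<subseteq> Z" "emeasure M B < emeasure M Z" "emeasure M B \<noteq> 0"
            using Zs Z0 unfolding is_atom_def by (auto simp: zero_less_iff_neq_zero)
          then show ?thesis using that[of B] False by (auto simp: zero_less_iff_neq_zero not_less top_unique)
        qed
        define N where "N = {x \<in> space M. f x \<notin> insert 0 E}"
        have "N = space M - {x \<in> space M. f x \<in> insert 0 E}" unfolding N_def by auto
        then have Ns: "N \<in> sets M" using fin_sets[OF fm, of "insert 0 E"] E(1) by auto
        have "{x \<in> space M. \<not> f x \<in> insert 0 E} = N" unfolding N_def by auto
        then have "emeasure M N = 0" using AE_iff_measurable[OF Ns] AE0 by auto
        then have Nnull: "N \<in> null_sets M" using Ns by auto
        define B0 where "B0 = Z' \<inter> {x \<in> space M. f x \<in> {0}}"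
        have B0s: "B0 \<in> sets M" unfolding B0_def using Z' fin_sets[OF fm, of "{0}"] by auto
        have "Z' \<subseteq> B0 \<union> N" using Z' unfolding B0_def N_def Z_def by auto
        then have "emeasure M Z' \<le> emeasure M (B0 \<union> N)" using B0s Nnull
          by (intro emeasure_mono) auto
        also have "\<dots> = emeasure M B0" using B0s Nnull by (rule emeasure_Un_null_set)
        finally have B0pos: "0 < emeasure M B0" using Z' by simp
        have "emeasure M B0 \<le> emeasure M Z'" unfolding B0_def using Z' by (intro emeasure_mono) auto
        then have B0fin: "emeasure M B0 < \<infinity>" using Z' by simp
        define W where "W = insert 0 E"
        have W: "finite W" "k < card W" using E E0 cE by (auto simp: W_def)
        obtain r where r: "0 < r" "\<forall>u\<in>W. \<forall>v\<in>W. u \<noteq> v \<longrightarrow> 3 * r \<le> \<bar>u - v\<bar>"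
          using min_sep[OF W(1)] by auto
        have rw: "w \<in> E \<Longrightarrow> 3 * r \<le> \<bar>w\<bar>" for w using r(2) E0 unfolding W_def by force
        define B where "B w = (if w = 0 then B0 else {x \<in> space M. \<bar>f x - w\<bar> < r})" for w
        have "False"
        proof (rule sep[OF p k f(2) W r(1), where B = B])
          show "\<And>w w'. w \<in> W \<Longrightarrow> w' \<in> W \<Longrightarrow> w \<noteq> w' \<Longrightarrow> 3 * r \<le> \<bar>w - w'\<bar>" using r by auto
          fix w assume w: "w \<in> W"
          show "B w \<in> sets M" using w B0s ess_ball(1)[OF f(1) p _ r(1) rw] E0
            by (auto simp: B_def W_def E_def)
          show "0 < emeasure M (B w)" using w B0pos ess_ball(2)[OF f(1) p _ r(1) rw] E0
            by (auto simp: B_def W_def E_def)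
          show "emeasure M (B w) < \<infinity>" using w B0fin ess_ball(3)[OF f(1) p _ r(1) rw] E0
            by (auto simp: B_def W_def E_def)
          show "\<And>x. x \<in> B w \<Longrightarrow> \<bar>f x - w\<bar> < r" using w r(1)
            by (auto simp: B_def B0_def split: if_splits)
        qed
        then show ?thesis by simp
      qed
    qed
  qed
  show ?thesis using I1 I2 I3 by blast
qed

end
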